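(* Fix $X\in\{\mathsf B,\mathsf C,\mathsf D\}$ and $n\in\mathbb Z_{>0}$. Let $v\in W^X_n$ with $k:=\mathsf{LD}(v)>0$, let $l\ge1$, and let $j_1,\dots,j_l\in\mathbb Z$ satisfy either $j_1<j_2<\cdots<j_l<k$, or (only when $X=\mathsf B$) $j_1=0$ and $j_2<\cdots<j_l<k$, such that $t_{j_ak}\in W^X_\infty$ and $\ell^X(vt_{j_1k}t_{j_2k}\cdots t_{j_ak})=\ell^X(v)+a$ for all $a\in[l]$. Let $u=vt_{j_1k}t_{j_2k}\cdots t_{j_lk}$. Then either (a) $u\in W^X_n$ and $u\prec_{\mathsf{LD}}v$, or (b) $u\in W^X_{n+1}$ and $\mathsf{LD}(u)<\mathsf{LD}(v)$.
   Context: A signed permutation is a bijection $w$ of $\mathbb Z$ with $w(-i)=-w(i)$ and $w(i)=i$ for all but finitely many $i$; $(wt)(m)=w(t(m))$. $W^{\mathsf B}_\infty=W^{\mathsf C}_\infty$: all signed permutations; $W^{\mathsf D}_\infty$: those with $|\{i>0:w(i)<0\}|$ even; $W^X_n$: elements fixing every $m>n$. Lengths $\ell^{\mathsf B}=\ell^{\mathsf C}=(\mathrm{inv}+\ell_0)/2$, $\ell^{\mathsf D}=(\mathrm{inv}-\ell_0)/2$, with $\mathrm{inv}(w)=|\{(p,q):p<q,w(p)>w(q)\}|$ over $\mathbb Z^2$ and $\ell_0(w)=|\{p>0:w(p)<0\}|$. For $i\ne0$, $t_{ij}=(i,j)(-i,-j)$; $t_{0j}=(-j,j)$ (in $W^{\mathsf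 B}_\infty$, not in $W^{\mathsf D}_\infty$). $\mathrm{Des}(w)=\{m>0:w(m)>w(m+1)\}$, $\mathsf{LD}(w)=\max(\{0\}\cup\mathrm{Des}(w))$. The partial order $\prec_{\mathsf{LD}}$ on signed permutations: $u\prec_{\mathsf{LD}}w$ iff $\mathsf{LD}(u)<\mathsf{LD}(w)$, or $0<\mathsf{LD}(u)=\mathsf{LD}(w)$ and $u(\mathsf{LD}(u))<w(\mathsf{LD}(w))$. *)

theory Defs
  imports Main
begin

datatype ctype = TB | TC | TD

definition signed_perm :: "(int \<Rightarrow> int) \<Rightarrow> bool" where
  "signed_perm w \<longleftrightarrow> bij w \<and> (\<forall>i. w (- i) = - w i) \<and> finite {i. w i \<noteq> i}"

definition ell0 :: "(int \<Rightarrow> int) \<Rightarrow> nat" where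
  "ell0 w = card {p::int. p > 0 \<and> w p < 0}"

definition invs :: "(int \<Rightarrow> int) \<Rightarrow> nat" where
  "invs w = card {(p, q). p \<noteq> 0 \<and> q \<noteq> 0 \<and> p < q \<and> w p > w q}"

definition W_inf :: "ctype \<Rightarrow> (int \<Rightarrow> int) set" where
  "W_inf X = {w. signed_perm w \<and> (X = TD \<longrightarrow> even (ell0 w))}"

definition W_n :: "ctype \<Rightarrow> nat \<Rightarrow> (int \<Rightarrow> int) set" where
  "W_n X n = {w. w \<in> W_inf X \<and> (\<forall>m. m > int n \<longrightarrow> w m = m)}"

definition len :: "ctype \<Rightarrow> (int \<Rightarrow> int) \<Rightarrow> int" where
  "len X w = (if X = TD then (int (invs w) - int (ell0 w)) div 2
              else (int (invs w) + int (ell0 w)) div 2)"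

definition transp :: "int \<Rightarrow> int \<Rightarrow> int \<Rightarrow> int" where
  "transp a b m = (if m = a then b else if m = b then a else m)"

(* t_{ij}; product of cycles read as composition of maps *)
definition tref :: "int \<Rightarrow> int \<Rightarrow> (int \<Rightarrow> int)" where
  "tref i j = (if i = 0 then transp (- j) j else transp i j \<circ> transp (- i) (- j))"

primrec tprod :: "(int \<Rightarrow> int) \<Rightarrow> (nat \<Rightarrow> int) \<Rightarrow> int \<Rightarrow> nat \<Rightarrow> (int \<Rightarrow> int)" where
  "tprod v j k 0 = v"
| "tprod v j k (Suc a) = tprod v j k a \<circ> tref (j (Suc a)) k"

definition Des :: "(int \<Rightarrow> int) \<Rightarrow> int set" where
  "Des w = {m. m > 0 \<and> w m > w (m + 1)}"

definition LD :: "(int \<Rightarrow> int) \<Rightarrow> int" where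
  "LD w = Max ({0} \<union> Des w)"

definition prec_LD :: "(int \<Rightarrow> int) \<Rightarrow> (int \<Rightarrow> int) \<Rightarrow> bool" where
  "prec_LD u w \<longleftrightarrow> LD u < LD w \<or> (0 < LD u \<and> LD u = LD w \<and> u (LD u) < w (LD w))"

end

theory Submission
  imports Defs
begin


lemma card_filter_sum:
  assumes "finite A"
  shows "int (card {x\<in>A. P x}) = (\<Sum>x\<in>A. of_bool (P x))"
proof -
  have "card {x\<in>A. P x} = (\<Sum>x\<in>A. if P x then 1 else 0::nat)"
    using sum.inter_filter[OF assms, of "\<lambda>_. 1::nat" P] by simp
  then have "int (card {x\<in>A. P x}) = (\<Sum>x\<in>A. int (if P x then 1 else 0))"
    by (simp add: of_nat_sum)
  also have "(\<Sum>x\<in>A. int (if P x then 1 else 0)) = (\<Sum>x\<in>A. of_bool (P x))"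
    by (rule sum.cong) auto
  finally show ?thesis .
qed

definition SW :: "int \<Rightarrow> int set" where "SW N = {-N..N} - {0}"

lemma finite_SW[simp]: "finite (SW N)" by (simp add: SW_def)

lemma win_bound:
  fixes w :: "int \<Rightarrow> int" and N x :: int
  assumes "inj w" "\<forall>x. N < \<bar>x\<bar> \<longrightarrow> w x = x" "\<bar>x\<bar> \<le> N"
  shows "\<bar>w x\<bar> \<le> N"
proof (rule ccontr)
  assume nt: "\<not> \<bar>w x\<bar> \<le> N"
  then have "N < \<bar>w x\<bar>" by linarith
  then have "w (w x) = w x" using assms(2) by blast
  then have "w x = x" using assms(1) by (simp add: inj_eq)
  then show False using nt assms(3) by simp
qed

lemma invs_sum:
  assumes "inj w" "w 0 = 0" "\<forall>x. N < \<bar>x\<bar> \<longrightarrow> w x = x"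
  shows "int (invs w) = (\<Sum>x\<in>SW N. \<Sum>y\<in>SW N. of_bool (x < y \<and> w y < w x))"
proof -
  have eq: "{(p, q). p \<noteq> 0 \<and> q \<noteq> 0 \<and> p < q \<and> w p > w q} = {z \<in> SW N \<times> SW N. fst z < snd z \<and> w (snd z) < w (fst z)}"
  proof (rule set_eqI, rule iffI)
    fix z assume "z \<in> {(p, q). p \<noteq> 0 \<and> q \<noteq> 0 \<and> p < q \<and> w p > w q}"
    then obtain a b where z: "z = (a,b)" and h: "a \<noteq> 0" "b \<noteq> 0" "a < b" "w b < w a" by auto
    have wb: "\<bar>w b\<bar> \<le> N" if "\<bar>b\<bar> \<le> N" using win_bound[OF assms(1,3) that] .
    have wa: "\<bar>w a\<bar> \<le> N" if "\<bar>a\<bar> \<le> N" using win_bound[OF assms(1,3) that] .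
    have A: "\<bar>a\<bar> \<le> N"
    proof (rule ccontr)
      assume na: "\<not> \<bar>a\<bar> \<le> N"
      then have "w a = a" using assms(3) by simp
      show False
      proof (cases "\<bar>b\<bar> \<le> N")
        case True then show False using wb[OF True] na h \<open>w a = a\<close> by linarith
      next
        case False then have "w b = b" using assms(3) by simp
        then show False using h \<open>w a = a\<close> by linarith
      qed
    qed
    have B: "\<bar>b\<bar> \<le> N"
    proof (rule ccontr)
      assume nb: "\<not> \<bar>b\<bar> \<le> N"
      then have "w b = b" using assms(3) by simp
      then show False using wa[OF A] nb h A by linarith
    qed
    show "z \<in> {z \<in> SW N \<times> SW N. fst z < snd z \<and> w (snd z) < w (fst z)}"
      using A B h z by (auto simp: SW_def)
  next
    fix z assume "z \<in> {z \<in> SW N \<times> SW N. fst z < snd z \<and> w (snd z) < w (fst z)}"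
    then show "z \<in> {(p, q). p \<noteq> 0 \<and> q \<noteq> 0 \<and> p < q \<and> w p > w q}"
      by (auto simp: SW_def)
  qed
  have "int (invs w) = int (card {z \<in> SW N \<times> SW N. fst z < snd z \<and> w (snd z) < w (fst z)})"
    unfolding invs_def eq ..
  also have "\<dots> = (\<Sum>z\<in>SW N \<times> SW N. of_bool (fst z < snd z \<and> w (snd z) < w (fst z)))"
    by (rule card_filter_sum) simp
  also have "\<dots> = (\<Sum>x\<in>SW N. \<Sum>y\<in>SW N. of_bool (x < y \<and> w y < w x))"
    by (subst sum.cartesian_product) (rule sum.cong, auto)
  finally show ?thesis .
qed

lemma ell0_sum:
  assumes "\<forall>x. N < \<bar>x\<bar> \<longrightarrow> w x = x"
  shows "int (ell0 w) = (\<Sum>x\<in>SW N. of_bool (0 < x \<and> w x < 0))"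
proof -
  have eq: "{p::int. p > 0 \<and> w p < 0} = {x \<in> SW N. 0 < x \<and> w x < 0}"
  proof (rule set_eqI, rule iffI)
    fix x assume "x \<in> {p::int. p > 0 \<and> w p < 0}"
    then have h: "x > 0" "w x < 0" by auto
    have "x \<le> N"
    proof (rule ccontr)
      assume "\<not> x \<le> N"
      then have "w x = x" using assms h by auto
      then show False using h by simp
    qed
    then show "x \<in> {x \<in> SW N. 0 < x \<and> w x < 0}" using h by (auto simp: SW_def)
  qed (auto simp: SW_def)
  show ?thesis unfolding ell0_def eq by (rule card_filter_sum) simp
qed

definition reflp :: "(int \<Rightarrow> int) \<Rightarrow> int \<Rightarrow> int \<Rightarrow> bool" where
  "reflp s p q \<longleftrightarrow> s p = q \<and> s q = p \<and> s (-p) = -q \<and> s (-q) = -p \<and>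
     (\<forall>x. x \<noteq> p \<and> x \<noteq> q \<and> x \<noteq> -p \<and> x \<noteq> -q \<longrightarrow> s x = x)"

lemma reflp_invol:
  assumes "reflp s p q" shows "s (s x) = x"
  using assms unfolding reflp_def by metis

lemma reflp_0:
  assumes "reflp s p q" "p \<noteq> 0" "q \<noteq> 0" shows "s 0 = 0"
  using assms unfolding reflp_def by (metis minus_equation_iff minus_zero)

lemma reflp_fix:
  assumes "reflp s p q" "x \<noteq> p" "x \<noteq> q" "x \<noteq> -p" "x \<noteq> -q" shows "s x = x"
  using assms unfolding reflp_def by blast

definition Fv :: "(int \<Rightarrow> int) \<Rightarrow> (int \<Rightarrow> int) \<Rightarrow> int \<Rightarrow> int \<Rightarrow> int" where
  "Fv w s x y = of_bool (w y < w x) * (of_bool (s x < s y) - of_bool (x < y))"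

definition Hv :: "(int \<Rightarrow> int) \<Rightarrow> (int \<Rightarrow> int) \<Rightarrow> int \<Rightarrow> int \<Rightarrow> int" where
  "Hv w s x y = Fv w s x y + Fv w s y x"

lemma sym_split:
  fixes g :: "int \<Rightarrow> int \<Rightarrow> int"
  assumes "finite S" "M \<subseteq> S" "\<And>x y. g x y = g y x" "\<And>x y. x \<in> S - M \<Longrightarrow> y \<in> S - M \<Longrightarrow> g x y = 0"
  shows "(\<Sum>x\<in>S. \<Sum>y\<in>S. g x y) = (\<Sum>x\<in>M. \<Sum>y\<in>M. g x y) + 2 * (\<Sum>y\<in>S - M. \<Sum>x\<in>M. g x y)"
proof -
  have sp: "\<And>f. (\<Sum>x\<in>S. f x) = (\<Sum>x\<in>S - M. f x) + (\<Sum>x\<in>M. f x)"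
    using sum.subset_diff[OF assms(2,1)] by blast
  have "(\<Sum>x\<in>S. \<Sum>y\<in>S. g x y) = (\<Sum>x\<in>S. (\<Sum>y\<in>S - M. g x y) + (\<Sum>y\<in>M. g x y))"
    by (rule sum.cong[OF refl], rule sp)
  also have "\<dots> = (\<Sum>x\<in>S - M. (\<Sum>y\<in>S - M. g x y) + (\<Sum>y\<in>M. g x y)) + (\<Sum>x\<in>M. (\<Sum>y\<in>S - M. g x y) + (\<Sum>y\<in>M. g x y))"
    by (rule sp)
  also have "(\<Sum>x\<in>S - M. (\<Sum>y\<in>S - M. g x y) + (\<Sum>y\<in>M. g x y)) = (\<Sum>x\<in>S - M. \<Sum>y\<in>M. g y x)"
    using assms(3,4) by (simp add: sum.distrib)
  also have "(\<Sum>x\<in>M. (\<Sum>y\<in>S - M. g x y) + (\<Sum>y\<in>M. g x y)) = (\<Sum>x\<in>M. \<Sum>y\<in>S - M. g x y) + (\<Sum>x\<in>M. \<Sum>y\<in>M. g x y)"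
    by (simp add: sum.distrib)
  also have "(\<Sum>x\<in>M. \<Sum>y\<in>S - M. g x y) = (\<Sum>y\<in>S - M. \<Sum>x\<in>M. g x y)"
    by (rule sum.swap)
  finally show ?thesis by simp
qed

lemma delta_invs:
  fixes w s :: "int \<Rightarrow> int" and N :: int
  assumes "inj w" "w 0 = 0" "\<forall>x. N < \<bar>x\<bar> \<longrightarrow> w x = x"
    and "\<And>x. s (s x) = x" "s 0 = 0" "\<forall>x. N < \<bar>x\<bar> \<longrightarrow> s x = x"
  shows "2 * (int (invs (w \<circ> s)) - int (invs w)) = (\<Sum>x\<in>SW N. \<Sum>y\<in>SW N. Hv w s x y)"
proof -
  have injs: "inj s" by (metis assms(4) injI)
  have sS: "s x \<in> SW N" if "x \<in> SW N" for x
  proof -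
    have "\<bar>s x\<bar> \<le> N" using win_bound[OF injs assms(6)] that by (auto simp: SW_def)
    moreover have "s x \<noteq> 0" using that assms(4,5) by (metis DiffE insertI1 SW_def)
    ultimately show ?thesis by (auto simp: SW_def)
  qed
  have bij: "bij_betw s (SW N) (SW N)"
    by (rule bij_betw_byWitness[where f'=s]) (use assms(4) sS in auto)
  have inj2: "inj (w \<circ> s)" using assms(1) injs by (simp add: inj_compose)
  have fix2: "\<forall>x. N < \<bar>x\<bar> \<longrightarrow> (w \<circ> s) x = x" using assms(3,6) by simp
  have z2: "(w \<circ> s) 0 = 0" using assms(2,5) by simp
  have "int (invs (w \<circ> s)) = (\<Sum>x\<in>SW N. \<Sum>y\<in>SW N. of_bool (x < y \<and> (w \<circ> s) y < (w \<circ> s) x))"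
    by (rule invs_sum[OF inj2 z2 fix2])
  also have "\<dots> = (\<Sum>x\<in>SW N. \<Sum>y\<in>SW N. of_bool (x < y \<and> w (s y) < w (s x)))"
    by (simp only: o_apply)
  also have "\<dots> = (\<Sum>x\<in>SW N. \<Sum>y\<in>SW N. of_bool (s (s x) < s (s y) \<and> w (s y) < w (s x)))"
    using assms(4) by simp
  also have "\<dots> = (\<Sum>x\<in>SW N. \<Sum>y\<in>SW N. of_bool (s (s x) < s y \<and> w y < w (s x)))"
    by (rule sum.cong[OF refl], rule sum.reindex_bij_betw[OF bij, where g = "\<lambda>y. of_bool (s (s _) < s y \<and> w y < w (s _))"])
  also have "\<dots> = (\<Sum>x\<in>SW N. \<Sum>y\<in>SW N. of_bool (s x < s y \<and> w y < w x))"
    by (rule sum.reindex_bij_betw[OF bij, where g = "\<lambda>x. \<Sum>y\<in>SW N. of_bool (s x < s y \<and> w y < w x)"])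
  finally have I1': "int (invs (w \<circ> s)) = (\<Sum>x\<in>SW N. \<Sum>y\<in>SW N. of_bool (s x < s y \<and> w y < w x))" .
  have I0: "int (invs w) = (\<Sum>x\<in>SW N. \<Sum>y\<in>SW N. of_bool (x < y \<and> w y < w x))"
    using invs_sum[OF assms(1-3)] .
  have D: "int (invs (w \<circ> s)) - int (invs w) = (\<Sum>x\<in>SW N. \<Sum>y\<in>SW N. Fv w s x y)"
    unfolding I1' I0 Fv_def sum_subtractf[symmetric]
    by (intro sum.cong refl) (simp add: of_bool_def)
  have "(\<Sum>x\<in>SW N. \<Sum>y\<in>SW N. Fv w s y x) = (\<Sum>x\<in>SW N. \<Sum>y\<in>SW N. Fv w s x y)"
    by (rule sum.swap)
  then show ?thesis unfolding D Hv_def by (simp add: sum.distrib)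
qed

lemma pairH:
  fixes w s :: "int \<Rightarrow> int"
  assumes "s a = b" "s b = a" "s y = y" "a < b" "w a < w b" "w y \<noteq> w a" "w y \<noteq> w b" "y \<noteq> a" "y \<noteq> b"
  shows "Hv w s a y + Hv w s b y \<ge> 0"
    and "a < y \<Longrightarrow> y < b \<Longrightarrow> w a < w y \<Longrightarrow> w y < w b \<Longrightarrow> Hv w s a y + Hv w s b y \<ge> 2"
  using assms by (auto simp: Hv_def Fv_def of_bool_def)

lemma Fv_alt: "Fv w s x y = (if w y < w x then (if s x < s y then 1 else 0) - (if x < y then 1 else 0) else 0)"
  by (simp add: Fv_def)

lemma MM4:
  fixes w s :: "int \<Rightarrow> int"
  assumes s1: "s p = q" and s2: "s q = p" and s3: "s (-p) = -q" and s4: "s (-q) = -p"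
    and "p < q" "p \<noteq> 0" "q \<noteq> 0" "p \<noteq> -q"
    "w p < w q" and w1: "w (-p) = - w p" and w2: "w (-q) = - w q" and "w p \<noteq> 0" "w q \<noteq> 0" "w p \<noteq> - w q"
  shows "(\<Sum>y\<in>{p,q,-p,-q}. \<Sum>x\<in>{p,q,-p,-q}. Hv w s x y)
          + 2 * (\<Sum>x\<in>{p,q,-p,-q}. of_bool (0 < x \<and> w (s x) < 0) - of_bool (0 < x \<and> w x < 0)) \<ge> 4"
   and "(\<Sum>y\<in>{p,q,-p,-q}. \<Sum>x\<in>{p,q,-p,-q}. Hv w s x y)
          - 2 * (\<Sum>x\<in>{p,q,-p,-q}. of_bool (0 < x \<and> w (s x) < 0) - of_bool (0 < x \<and> w x < 0)) \<ge> 4"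
proof -
  have d: "p \<noteq> q" "p \<noteq> -p" "p \<noteq> -q" "q \<noteq> -p" "q \<noteq> -q" "-p \<noteq> -q"
    using assms by auto
  have e: "\<And>f::int\<Rightarrow>int. (\<Sum>x\<in>{p,q,-p,-q}. f x) = f p + f q + f (-p) + f (-q)"
    using d by (simp add: add.assoc)
  have hxx: "\<And>x. Hv w s x x = 0" by (simp add: Hv_def Fv_def)
  define dl :: int where "dl = of_bool (q < 0) - of_bool (p < 0)"
  define sP :: int where "sP = of_bool (0 < w p) - of_bool (w p < 0)"
  define sQ :: int where "sQ = of_bool (0 < w q) - of_bool (w q < 0)"
  have h1: "Hv w s p q = 1" "Hv w s q p = 1" "Hv w s (-p) (-q) = 1" "Hv w s (-q) (-p) = 1"
    using assms by (auto simp: Hv_def Fv_def)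
  have h2: "Hv w s p (-q) = 0" "Hv w s (-q) p = 0" "Hv w s q (-p) = 0" "Hv w s (-p) q = 0"
    using assms by (auto simp: Hv_def Fv_def)
  have h3: "Hv w s p (-p) = dl * sP" "Hv w s (-p) p = dl * sP"
    using assms unfolding dl_def sP_def by (auto simp: Hv_def Fv_def)
  have h4: "Hv w s q (-q) = - dl * sQ" "Hv w s (-q) q = - dl * sQ"
    using assms unfolding dl_def sQ_def by (auto simp: Hv_def Fv_def)
  have E: "(\<Sum>x\<in>{p,q,-p,-q}. of_bool (0 < x \<and> w (s x) < 0) - of_bool (0 < x \<and> w x < 0)) = (
    of_bool (0 < p \<and> w q < 0) - of_bool (0 < p \<and> w p < 0) + (of_bool (0 < q \<and> w p < 0) - of_bool (0 < q \<and> w q < 0))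
       + (of_bool (p < 0 \<and> 0 < w q) - of_bool (p < 0 \<and> 0 < w p)) + (of_bool (q < 0 \<and> 0 < w p) - of_bool (q < 0 \<and> 0 < w q)) :: int)"
    by (simp only: e) (simp add: s1 s2 s3 s4 w1 w2)
  have MM: "(\<Sum>y\<in>{p,q,-p,-q}. \<Sum>x\<in>{p,q,-p,-q}. Hv w s x y) = 2 * (2 + dl * sP - dl * sQ)"
    unfolding e hxx h1 h2 h3 h4 by simp
  show "(\<Sum>y\<in>{p,q,-p,-q}. \<Sum>x\<in>{p,q,-p,-q}. Hv w s x y)
          + 2 * (\<Sum>x\<in>{p,q,-p,-q}. of_bool (0 < x \<and> w (s x) < 0) - of_bool (0 < x \<and> w x < 0)) \<ge> 4"
    unfolding MM E dl_def sP_def sQ_def using assms(5-9,12-14)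
    by (cases "p < 0"; cases "q < 0"; cases "w p < 0"; cases "w q < 0") simp_all
  show "(\<Sum>y\<in>{p,q,-p,-q}. \<Sum>x\<in>{p,q,-p,-q}. Hv w s x y)
          - 2 * (\<Sum>x\<in>{p,q,-p,-q}. of_bool (0 < x \<and> w (s x) < 0) - of_bool (0 < x \<and> w x < 0)) \<ge> 4"
    unfolding MM E dl_def sP_def sQ_def using assms(5-9,12-14)
    by (cases "p < 0"; cases "q < 0"; cases "w p < 0"; cases "w q < 0") simp_all
qed

lemma E4_even:
  fixes w s :: "int \<Rightarrow> int"
  assumes s1: "s p = q" and s2: "s q = p" and s3: "s (-p) = -q" and s4: "s (-q) = -p"
    and "p < q" "p \<noteq> 0" "q \<noteq> 0" "p \<noteq> -q"
    and w1: "w (-p) = - w p" and w2: "w (-q) = - w q" and "w p \<noteq> 0" "w q \<noteq> 0"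
  shows "even (\<Sum>x\<in>{p,q,-p,-q}. of_bool (0 < x \<and> w (s x) < 0) - of_bool (0 < x \<and> w x < 0) :: int)"
proof -
  have d: "p \<noteq> q" "p \<noteq> -p" "p \<noteq> -q" "q \<noteq> -p" "q \<noteq> -q" "-p \<noteq> -q"
    using assms by auto
  have e: "\<And>f::int\<Rightarrow>int. (\<Sum>x\<in>{p,q,-p,-q}. f x) = f p + f q + f (-p) + f (-q)"
    using d by (simp add: add.assoc)
  show ?thesis
    unfolding e using s1 s2 s3 s4 w1 w2 assms(5-8,11,12)
    by (cases "p < 0"; cases "q < 0"; cases "w p < 0"; cases "w q < 0") simp_all
qed



lemma sp_basic:
  assumes "signed_perm w"
  shows "inj w" "\<And>x. w (-x) = - w x" "w 0 = 0" "\<exists>N\<ge>0. \<forall>x. N < \<bar>x\<bar> \<longrightarrow> w x = x"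
proof -
  show "inj w" using assms by (simp add: signed_perm_def bij_is_inj)
  show wm: "\<And>x. w (-x) = - w x" using assms by (simp add: signed_perm_def)
  show "w 0 = 0" using wm[of 0] by simp
  have fin: "finite {i. w i \<noteq> i}" using assms by (simp add: signed_perm_def)
  define N where "N = Max (insert 0 (abs ` {i. w i \<noteq> i}))"
  have "N \<ge> 0" unfolding N_def using fin by simp
  moreover have "\<forall>x. N < \<bar>x\<bar> \<longrightarrow> w x = x"
  proof (intro allI impI)
    fix x assume "N < \<bar>x\<bar>"
    show "w x = x"
    proof (rule ccontr)
      assume "w x \<noteq> x"
      then have "\<bar>x\<bar> \<le> N" unfolding N_def using fin by (intro Max_ge) auto
      then show False using \<open>N < \<bar>x\<bar>\<close> by simp
    qed
  qed
  ultimately show "\<exists>N\<ge>0. \<forall>x. N < \<bar>x\<bar> \<longrightarrow> w x = x" by blast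
qed

lemma core:
  fixes w s :: "int \<Rightarrow> int" and X :: ctype
  assumes sp: "signed_perm w" and rp: "reflp s p q" and pq: "p < q" and p0: "p \<noteq> 0" and q0: "q \<noteq> 0"
    and wpq: "w p < w q" and D: "X = TD \<Longrightarrow> p \<noteq> -q"
  defines "B \<equiv> (\<exists>m. m \<noteq> 0 \<and> m \<noteq> p \<and> m \<noteq> q \<and> m \<noteq> -p \<and> m \<noteq> -q \<and> p < m \<and> m < q \<and> w p < w m \<and> w m < w q)"
  shows "(if X = TD then (int (invs (w \<circ> s)) - int (ell0 (w \<circ> s))) - (int (invs w) - int (ell0 w))
          else (int (invs (w \<circ> s)) + int (ell0 (w \<circ> s))) - (int (invs w) + int (ell0 w))) \<ge> 2 + 2 * of_bool B"
proof -
  note wb = sp_basic[OF sp]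
  obtain N0 where N0: "N0 \<ge> 0" "\<forall>x. N0 < \<bar>x\<bar> \<longrightarrow> w x = x" using wb(4) by blast
  define N where "N = N0 + \<bar>p\<bar> + \<bar>q\<bar>"
  have fixw: "\<forall>x. N < \<bar>x\<bar> \<longrightarrow> w x = x" using N0 unfolding N_def by auto
  have fixs: "\<forall>x. N < \<bar>x\<bar> \<longrightarrow> s x = x"
  proof (intro allI impI)
    fix x assume "N < \<bar>x\<bar>"
    then have "x \<noteq> p" "x \<noteq> q" "x \<noteq> -p" "x \<noteq> -q" using N0 unfolding N_def by auto
    then show "s x = x" using reflp_fix[OF rp] by blast
  qed
  have inv: "\<And>x. s (s x) = x" using reflp_invol[OF rp] .
  have s0: "s 0 = 0" using reflp_0[OF rp p0 q0] .
  have sv: "s p = q" "s q = p" "s (-p) = -q" "s (-q) = -p" using rp unfolding reflp_def by auto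
  define S where "S = SW N"
  define M where "M = {p,q,-p,-q}"
  have MS: "M \<subseteq> S" unfolding M_def S_def SW_def N_def using p0 q0 N0 by auto
  have finS: "finite S" unfolding S_def by simp
  have DI: "2 * (int (invs (w \<circ> s)) - int (invs w)) = (\<Sum>x\<in>S. \<Sum>y\<in>S. Hv w s x y)"
    unfolding S_def by (rule delta_invs[OF wb(1) wb(3) fixw inv s0 fixs])
  have sfix: "s x = x" if "x \<notin> M" for x using that reflp_fix[OF rp] unfolding M_def by blast
  have split: "(\<Sum>x\<in>S. \<Sum>y\<in>S. Hv w s x y) = (\<Sum>x\<in>M. \<Sum>y\<in>M. Hv w s x y) + 2 * (\<Sum>y\<in>S - M. \<Sum>x\<in>M. Hv w s x y)"
    by (rule sym_split[OF finS MS]) (auto simp: Hv_def Fv_def sfix)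
  have wne: "w x \<noteq> w y" if "x \<noteq> y" for x y using wb(1) that by (simp add: inj_eq)
  have K: "(\<Sum>x\<in>M. Hv w s x y) \<ge> 0 \<and> (p < y \<and> y < q \<and> w p < w y \<and> w y < w q \<longrightarrow> (\<Sum>x\<in>M. Hv w s x y) \<ge> 2)"
    if y: "y \<in> S - M" for y
  proof -
    have yM: "y \<noteq> p" "y \<noteq> q" "y \<noteq> -p" "y \<noteq> -q" "s y = y" using y sfix unfolding M_def by auto
    have A1: "Hv w s p y + Hv w s q y \<ge> 0"
      by (rule pairH(1)) (use sv yM pq wpq wne in auto)
    have A2: "p < y \<Longrightarrow> y < q \<Longrightarrow> w p < w y \<Longrightarrow> w y < w q \<Longrightarrow> Hv w s p y + Hv w s q y \<ge> 2"
      by (rule pairH(2)) (use sv yM pq wpq wne in auto)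
    show ?thesis
    proof (cases "p = -q")
      case True
      then have "M = {p, q}" unfolding M_def by auto
      then have "(\<Sum>x\<in>M. Hv w s x y) = Hv w s p y + Hv w s q y" using pq by simp
      then show ?thesis using A1 A2 by simp
    next
      case False
      have f1: "w (-q) < w (-p)" using wpq wb(2)[of p] wb(2)[of q] by simp
      have f2: "w y \<noteq> w (-q)" "w y \<noteq> w (-p)" using wne yM by auto
      have B1: "Hv w s (-q) y + Hv w s (-p) y \<ge> 0"
        by (rule pairH(1)) (use sv yM pq f1 f2 in auto)
      have d: "p \<noteq> q" "p \<noteq> -p" "p \<noteq> -q" "q \<noteq> -p" "q \<noteq> -q" "-p \<noteq> -q"
        using False pq p0 q0 by auto
      have "(\<Sum>x\<in>M. Hv w s x y) = (Hv w s p y + Hv w s q y) + (Hv w s (-q) y + Hv w s (-p) y)"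
        unfolding M_def using d by simp
      then show ?thesis using A1 A2 B1 by force
    qed
  qed
  have Knn: "(\<Sum>y\<in>S - M. \<Sum>x\<in>M. Hv w s x y) \<ge> 2 * of_bool B"
  proof (cases B)
    case True
    then obtain m where m: "m \<noteq> 0" "m \<noteq> p" "m \<noteq> q" "m \<noteq> -p" "m \<noteq> -q" "p < m" "m < q" "w p < w m" "w m < w q"
      unfolding B_def by blast
    have mS: "m \<in> S - M" using m unfolding S_def SW_def M_def N_def using N0 by auto
    have "(\<Sum>x\<in>M. Hv w s x m) \<le> (\<Sum>y\<in>S - M. \<Sum>x\<in>M. Hv w s x y)"
      by (rule member_le_sum[OF mS]) (use K finS in auto)
    then show ?thesis using K[OF mS] m True by simp
  next
    case False
    have "(\<Sum>y\<in>S - M. \<Sum>x\<in>M. Hv w s x y) \<ge> 0" by (rule sum_nonneg) (use K in auto)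
    then show ?thesis using False by simp
  qed
  have fix2: "\<forall>x. N < \<bar>x\<bar> \<longrightarrow> (w \<circ> s) x = x" using fixw fixs by simp
  have DE: "int (ell0 (w \<circ> s)) - int (ell0 w) = (\<Sum>x\<in>M. of_bool (0 < x \<and> w (s x) < 0) - of_bool (0 < x \<and> w x < 0))"
  proof -
    have "int (ell0 (w \<circ> s)) - int (ell0 w) = (\<Sum>x\<in>S. of_bool (0 < x \<and> w (s x) < 0) - of_bool (0 < x \<and> w x < 0))"
      unfolding ell0_sum[OF fix2] ell0_sum[OF fixw] S_def sum_subtractf by simp
    also have "\<dots> = (\<Sum>x\<in>M. of_bool (0 < x \<and> w (s x) < 0) - of_bool (0 < x \<and> w x < 0))"
      by (rule sum.mono_neutral_right[OF finS MS]) (auto simp: sfix)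
    finally show ?thesis .
  qed
  show ?thesis
  proof (cases "p = -q")
    case True
    then have X: "X \<noteq> TD" using D by blast
    have Mpq: "M = {p, q}" unfolding M_def using True by auto
    have MM: "(\<Sum>x\<in>M. \<Sum>y\<in>M. Hv w s x y) = 2"
      unfolding Mpq using pq sv wpq by (simp add: Hv_def Fv_def)
    have "w q > 0" using wpq True wb(2)[of q] by simp
    have e2: "\<And>f::int\<Rightarrow>int. (\<Sum>x\<in>{p,q}. f x) = f p + f q" using pq by simp
    have E: "int (ell0 (w \<circ> s)) - int (ell0 w) = 1"
      unfolding DE Mpq e2 using pq sv True wpq \<open>w q > 0\<close> wb(2)[of q] by simp
    show ?thesis using X MM E DI split Knn by simp
  next
    case False
    have MM4': "(\<Sum>y\<in>M. \<Sum>x\<in>M. Hv w s x y) + 2 * (int (ell0 (w \<circ> s)) - int (ell0 w)) \<ge> 4"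
               "(\<Sum>y\<in>M. \<Sum>x\<in>M. Hv w s x y) - 2 * (int (ell0 (w \<circ> s)) - int (ell0 w)) \<ge> 4"
    proof -
      have f: "w p \<noteq> 0" "w q \<noteq> 0" "w p \<noteq> - w q"
        using wne[of p 0] wne[of q 0] wne[of p "-q"] wb(3) wb(2)[of q] p0 q0 False by auto
      have f2: "w (-p) = - w p" "w (-q) = - w q" using wb(2) by auto
      show "(\<Sum>y\<in>M. \<Sum>x\<in>M. Hv w s x y) + 2 * (int (ell0 (w \<circ> s)) - int (ell0 w)) \<ge> 4"
        unfolding DE M_def by (rule MM4(1)[OF sv pq p0 q0 False wpq f2 f])
      show "(\<Sum>y\<in>M. \<Sum>x\<in>M. Hv w s x y) - 2 * (int (ell0 (w \<circ> s)) - int (ell0 w)) \<ge> 4"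
        unfolding DE M_def by (rule MM4(2)[OF sv pq p0 q0 False wpq f2 f])
    qed
    have sw: "(\<Sum>y\<in>M. \<Sum>x\<in>M. Hv w s x y) = (\<Sum>x\<in>M. \<Sum>y\<in>M. Hv w s x y)" by (rule sum.swap)
    show ?thesis using MM4' sw DI split Knn by auto
  qed
qed

lemma DE_lemma:
  fixes w s :: "int \<Rightarrow> int"
  assumes sp: "signed_perm w" and rp: "reflp s p q" and p0: "p \<noteq> 0" and q0: "q \<noteq> 0"
  shows "int (ell0 (w \<circ> s)) - int (ell0 w) = (\<Sum>x\<in>{p,q,-p,-q}. of_bool (0 < x \<and> w (s x) < 0) - of_bool (0 < x \<and> w x < 0))"
proof -
  note wb = sp_basic[OF sp]
  obtain N0 where N0: "N0 \<ge> 0" "\<forall>x. N0 < \<bar>x\<bar> \<longrightarrow> w x = x" using wb(4) by blast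
  define N where "N = N0 + \<bar>p\<bar> + \<bar>q\<bar>"
  have fixw: "\<forall>x. N < \<bar>x\<bar> \<longrightarrow> w x = x" using N0 unfolding N_def by auto
  have fixs: "\<forall>x. N < \<bar>x\<bar> \<longrightarrow> s x = x"
  proof (intro allI impI)
    fix x assume "N < \<bar>x\<bar>"
    then have "x \<noteq> p" "x \<noteq> q" "x \<noteq> -p" "x \<noteq> -q" using N0 unfolding N_def by auto
    then show "s x = x" using reflp_fix[OF rp] by blast
  qed
  define S where "S = SW N"
  define M where "M = {p,q,-p,-q}"
  have MS: "M \<subseteq> S" unfolding M_def S_def SW_def N_def using p0 q0 N0 by auto
  have finS: "finite S" unfolding S_def by simp
  have sfix: "s x = x" if "x \<notin> M" for x using that reflp_fix[OF rp] unfolding M_def by blast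
  have fix2: "\<forall>x. N < \<bar>x\<bar> \<longrightarrow> (w \<circ> s) x = x" using fixw fixs by simp
  have "int (ell0 (w \<circ> s)) - int (ell0 w) = (\<Sum>x\<in>S. of_bool (0 < x \<and> w (s x) < 0) - of_bool (0 < x \<and> w x < 0))"
    unfolding ell0_sum[OF fix2] ell0_sum[OF fixw] S_def sum_subtractf by simp
  also have "\<dots> = (\<Sum>x\<in>M. of_bool (0 < x \<and> w (s x) < 0) - of_bool (0 < x \<and> w x < 0))"
    by (rule sum.mono_neutral_right[OF finS MS]) (auto simp: sfix)
  finally show ?thesis unfolding M_def .
qed

lemma parity_step:
  fixes w s :: "int \<Rightarrow> int"
  assumes sp: "signed_perm w" and rp: "reflp s p q" and pq: "p < q" and p0: "p \<noteq> 0" and q0: "q \<noteq> 0"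
    and npq: "p \<noteq> -q"
  shows "even (ell0 (w \<circ> s)) = even (ell0 w)"
proof -
  note wb = sp_basic[OF sp]
  have wne: "w x \<noteq> w y" if "x \<noteq> y" for x y using wb(1) that by (simp add: inj_eq)
  have sv: "s p = q" "s q = p" "s (-p) = -q" "s (-q) = -p" using rp unfolding reflp_def by auto
  have f: "w p \<noteq> 0" "w q \<noteq> 0" using wne[of p 0] wne[of q 0] wb(3) p0 q0 by auto
  have f2: "w (-p) = - w p" "w (-q) = - w q" using wb(2) by auto
  have "even (int (ell0 (w \<circ> s)) - int (ell0 w))"
    unfolding DE_lemma[OF sp rp p0 q0] by (rule E4_even[OF sv pq p0 q0 npq f2 f])
  then show ?thesis by simp
qed

lemma len_incr:
  fixes w s :: "int \<Rightarrow> int" and X :: ctype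
  assumes sp: "signed_perm w" and rp: "reflp s p q" and pq: "p < q" and p0: "p \<noteq> 0" and q0: "q \<noteq> 0"
    and wpq: "w p < w q" and D: "X = TD \<Longrightarrow> p \<noteq> -q"
  shows "len X (w \<circ> s) \<ge> len X w + 1"
    and "m \<noteq> 0 \<Longrightarrow> m \<noteq> p \<Longrightarrow> m \<noteq> q \<Longrightarrow> m \<noteq> -p \<Longrightarrow> m \<noteq> -q \<Longrightarrow> p < m \<Longrightarrow> m < q \<Longrightarrow>
          w p < w m \<Longrightarrow> w m < w q \<Longrightarrow> len X (w \<circ> s) \<ge> len X w + 2"
proof -
  define B where "B \<equiv> (\<exists>m. m \<noteq> 0 \<and> m \<noteq> p \<and> m \<noteq> q \<and> m \<noteq> -p \<and> m \<noteq> -q \<and> p < m \<and> m < q \<and> w p < w m \<and> w m < w q)"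
  have c: "(if X = TD then (int (invs (w \<circ> s)) - int (ell0 (w \<circ> s))) - (int (invs w) - int (ell0 w))
          else (int (invs (w \<circ> s)) + int (ell0 (w \<circ> s))) - (int (invs w) + int (ell0 w))) \<ge> 2 + 2 * of_bool B"
    unfolding B_def by (rule core[OF sp rp pq p0 q0 wpq D])
  have dv: "\<And>a b :: int. b \<ge> a + 2 + 2 * of_bool B \<Longrightarrow> b div 2 \<ge> a div 2 + 1 + of_bool B"
  proof -
    fix a b :: int assume "b \<ge> a + 2 + 2 * of_bool B"
    then have "b div 2 \<ge> (a + 2 * (1 + of_bool B)) div 2" by (intro zdiv_mono1) auto
    then show "b div 2 \<ge> a div 2 + 1 + of_bool B" by simp
  qed
  have main: "len X (w \<circ> s) \<ge> len X w + 1 + of_bool B"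
    unfolding len_def using c by (cases "X = TD") (auto intro: dv)
  have "(of_bool B :: int) \<ge> 0" by simp
  then show "len X (w \<circ> s) \<ge> len X w + 1" using main by linarith
  show "m \<noteq> 0 \<Longrightarrow> m \<noteq> p \<Longrightarrow> m \<noteq> q \<Longrightarrow> m \<noteq> -p \<Longrightarrow> m \<noteq> -q \<Longrightarrow> p < m \<Longrightarrow> m < q \<Longrightarrow>
          w p < w m \<Longrightarrow> w m < w q \<Longrightarrow> len X (w \<circ> s) \<ge> len X w + 2"
  proof -
    assume "m \<noteq> 0" "m \<noteq> p" "m \<noteq> q" "m \<noteq> -p" "m \<noteq> -q" "p < m" "m < q" "w p < w m" "w m < w q"
    then have "B" unfolding B_def by blast
    then show ?thesis using main by simp
  qed
qed



lemma transp_invol: "transp a b (transp a b x) = x" by (simp add: transp_def)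

lemma tref_id: "k \<noteq> 0 \<Longrightarrow> tref (-k) k = id"
  by (rule ext) (simp add: tref_def transp_def)

lemma tref_refl0: "k \<noteq> 0 \<Longrightarrow> reflp (tref 0 k) (-k) k"
  by (simp add: tref_def transp_def reflp_def)

lemma tref_refl: "j \<noteq> 0 \<Longrightarrow> k \<noteq> 0 \<Longrightarrow> j \<noteq> k \<Longrightarrow> j \<noteq> -k \<Longrightarrow> reflp (tref j k) j k"
  by (auto simp: tref_def transp_def reflp_def)

lemma tref_fix: "x \<noteq> j \<Longrightarrow> x \<noteq> -j \<Longrightarrow> x \<noteq> k \<Longrightarrow> x \<noteq> -k \<Longrightarrow> tref j k x = x"
  by (auto simp: tref_def transp_def)

lemma reflp_sp:
  assumes rp: "reflp s p q" and "p \<noteq> 0" "q \<noteq> 0"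
  shows "signed_perm s"
proof -
  have inv: "\<And>x. s (s x) = x" using reflp_invol[OF rp] .
  have sv: "s p = q" "s q = p" "s (-p) = -q" "s (-q) = -p" using rp unfolding reflp_def by blast+
  have "bij s" by (rule bij_betw_byWitness[where f'=s]) (use inv in auto)
  moreover have "\<forall>i. s (- i) = - s i"
  proof
    fix i
    show "s (- i) = - s i"
    proof (cases "i \<in> {p, q, -p, -q}")
      case True then show ?thesis using sv by auto
    next
      case False
      then have "s i = i" "s (-i) = -i" using reflp_fix[OF rp] by auto
      then show ?thesis by simp
    qed
  qed
  moreover have "finite {i. s i \<noteq> i}"
  proof (rule finite_subset[of _ "{p, q, -p, -q}"])
    show "{i. s i \<noteq> i} \<subseteq> {p, q, -p, -q}" using reflp_fix[OF rp] by blast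
  qed simp
  ultimately show ?thesis unfolding signed_perm_def by blast
qed

lemma sp_comp:
  assumes "signed_perm w" "signed_perm t"
  shows "signed_perm (w \<circ> t)"
proof -
  have "bij (w \<circ> t)" using assms by (simp add: signed_perm_def bij_comp)
  moreover have "\<forall>i. (w \<circ> t) (- i) = - (w \<circ> t) i" using assms by (simp add: signed_perm_def)
  moreover have "finite {i. (w \<circ> t) i \<noteq> i}"
  proof (rule finite_subset[of _ "{i. w i \<noteq> i} \<union> {i. t i \<noteq> i}"])
    show "{i. (w \<circ> t) i \<noteq> i} \<subseteq> {i. w i \<noteq> i} \<union> {i. t i \<noteq> i}" by auto
  qed (use assms in \<open>simp add: signed_perm_def\<close>)
  ultimately show ?thesis unfolding signed_perm_def by blast
qed

lemma tref_sp: "k \<noteq> 0 \<Longrightarrow> signed_perm (tref j k)"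
proof -
  assume k: "k \<noteq> 0"
  show ?thesis
  proof (cases "j = 0")
    case True then show ?thesis using reflp_sp[OF tref_refl0[OF k]] k by simp
  next
    case j0: False
    show ?thesis
    proof (cases "j = k \<or> j = -k")
      case True
      then show ?thesis
      proof
        assume "j = -k" then show ?thesis using tref_id[OF k]
          by (simp add: signed_perm_def)
      next
        assume "j = k"
        then have "tref j k = id" by (intro ext) (simp add: tref_def transp_def)
        then show ?thesis by (simp add: signed_perm_def)
      qed
    next
      case False
      then show ?thesis using reflp_sp[OF tref_refl[OF j0 k]] j0 k by auto
    qed
  qed
qed

lemma stepA:
  fixes w :: "int \<Rightarrow> int" and X :: ctype
  assumes sp: "signed_perm w" and k0: "0 < k" and jk: "j < k" and D: "X = TD \<Longrightarrow> j \<noteq> 0"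
    and ln: "len X (w \<circ> tref j k) = len X w + 1"
  shows "j \<noteq> -k" "w (if j = 0 then -k else j) < w k" "(w \<circ> tref j k) k = w (if j = 0 then -k else j)"
    "reflp (tref j k) (if j = 0 then -k else j) k"
proof -
  show jk': "j \<noteq> -k"
  proof
    assume "j = -k"
    then have "w \<circ> tref j k = w" using tref_id[of k] k0 by simp
    then show False using ln by simp
  qed
  define pj where "pj = (if j = 0 then -k else j)"
  have rp: "reflp (tref j k) pj k"
    unfolding pj_def using tref_refl0[of k] tref_refl[of j k] k0 jk jk' by auto
  then show "reflp (tref j k) (if j = 0 then -k else j) k" unfolding pj_def .
  have pk: "pj < k" "pj \<noteq> 0" "pj \<noteq> k" unfolding pj_def using k0 jk by auto
  have sv: "tref j k k = pj" using rp unfolding reflp_def by blast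
  show "(w \<circ> tref j k) k = w (if j = 0 then -k else j)" using sv unfolding pj_def by simp
  note wb = sp_basic[OF sp]
  have ne: "w pj \<noteq> w k" using wb(1) pk by (simp add: inj_eq)
  show "w (if j = 0 then -k else j) < w k"
  proof (rule ccontr)
    assume "\<not> w (if j = 0 then -k else j) < w k"
    then have gt: "w k < w pj" using ne unfolding pj_def by auto
    define w' where "w' = w \<circ> tref j k"
    have sp': "signed_perm w'" unfolding w'_def
      by (rule sp_comp[OF sp reflp_sp[OF rp pk(2)]]) (use k0 in simp)
    have inv: "\<And>x. tref j k (tref j k x) = x" using reflp_invol[OF rp] .
    have w'v: "w' pj < w' k" unfolding w'_def using rp gt unfolding reflp_def by auto
    have "len X (w' \<circ> tref j k) \<ge> len X w' + 1"
      by (rule len_incr(1)[OF sp' rp pk(1) pk(2) _ w'v]) (use k0 D pj_def jk' in auto)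
    moreover have "w' \<circ> tref j k = w" unfolding w'_def using inv by (intro ext) simp
    ultimately show False using ln unfolding w'_def by simp
  qed
qed



lemma tprod_untouched:
  assumes "a \<le> b" "\<forall>c. a < c \<and> c \<le> b \<longrightarrow> x \<noteq> j c \<and> x \<noteq> - j c \<and> x \<noteq> k \<and> x \<noteq> -k"
  shows "tprod v j k b x = tprod v j k a x"
  using assms
proof (induction b)
  case 0 then show ?case by simp
next
  case (Suc b)
  show ?case
  proof (cases "a = Suc b")
    case True then show ?thesis by simp
  next
    case False
    then have ab: "a \<le> b" using Suc.prems by simp
    have "tref (j (Suc b)) k x = x" using Suc.prems(2) ab by (intro tref_fix) auto
    then have "tprod v j k (Suc b) x = tprod v j k b x" by simp
    also have "\<forall>c. a < c \<and> c \<le> b \<longrightarrow> x \<noteq> j c \<and> x \<noteq> - j c \<and> x \<noteq> k \<and> x \<noteq> -k"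
      using Suc.prems(2) by auto
    then have "tprod v j k b x = tprod v j k a x" using Suc.IH[OF ab] by blast
    finally show ?thesis .
  qed
qed

lemma Des_bound:
  assumes "\<forall>x. x > N \<longrightarrow> u x = x"
  shows "Des u \<subseteq> {1..N}"
proof
  fix m assume "m \<in> Des u"
  then have m: "m > 0" "u m > u (m + 1)" by (auto simp: Des_def)
  have "m \<le> N"
  proof (rule ccontr)
    assume "\<not> m \<le> N"
    then have "u m = m" "u (m+1) = m + 1" using assms by auto
    then show False using m by simp
  qed
  then show "m \<in> {1..N}" using m by simp
qed

lemma Des_finite: "\<forall>x. x > N \<longrightarrow> u x = x \<Longrightarrow> finite (Des u)"
  using Des_bound by (meson finite_atLeastAtMost_int finite_subset)

lemma LD_le:
  assumes "\<forall>x. x > N \<longrightarrow> u x = x" "k \<ge> 0" "\<forall>x. x > k \<longrightarrow> u x < u (x + 1)"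
  shows "LD u \<le> k"
proof -
  have fin: "finite ({0} \<union> Des u)" using Des_finite[OF assms(1)] by simp
  have "\<forall>m \<in> {0} \<union> Des u. m \<le> k"
  proof
    fix m assume "m \<in> {0} \<union> Des u"
    then show "m \<le> k"
    proof
      assume "m \<in> {0}" then show ?thesis using assms(2) by simp
    next
      assume "m \<in> Des u"
      then have "u m > u (m+1)" by (simp add: Des_def)
      then show ?thesis using assms(3) by (meson leI order_less_asym)
    qed
  qed
  then show ?thesis unfolding LD_def using fin by (simp add: Max_le_iff)
qed

lemma LD_in:
  assumes "\<forall>x. x > N \<longrightarrow> u x = x" "LD u > 0"
  shows "LD u \<in> Des u"
proof -
  have fin: "finite ({0} \<union> Des u)" using Des_finite[OF assms(1)] by simp
  have "LD u \<in> {0} \<union> Des u" unfolding LD_def using fin by (intro Max_in) auto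
  then show ?thesis using assms(2) by auto
qed

lemma LD_ge:
  assumes "\<forall>x. x > N \<longrightarrow> u x = x" "m \<in> Des u"
  shows "m \<le> LD u"
proof -
  have fin: "finite ({0} \<union> Des u)" using Des_finite[OF assms(1)] by simp
  show ?thesis unfolding LD_def using fin assms(2) by (intro Max_ge) auto
qed

lemma ell0_tref0:
  assumes "k > 0" shows "ell0 (tref 0 k) = 1"
proof -
  have "{p::int. p > 0 \<and> tref 0 k p < 0} = {k}"
    using assms by (auto simp: tref_def transp_def split: if_splits)
  then show ?thesis unfolding ell0_def by simp
qed

lemma sp_fix_abs:
  assumes "signed_perm w" "\<forall>x. x > N \<longrightarrow> w x = x"
  shows "\<forall>x. N < \<bar>x\<bar> \<longrightarrow> w x = x"
proof (intro allI impI)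
  fix x assume h: "N < \<bar>x\<bar>"
  show "w x = x"
  proof (cases "x > N")
    case True then show ?thesis using assms(2) by simp
  next
    case False
    then have "-x > N" using h by linarith
    then have "w (-x) = -x" using assms(2) by simp
    then show ?thesis using sp_basic(2)[OF assms(1), of x] by simp
  qed
qed

lemma sp_val_bound:
  assumes "signed_perm w" "\<forall>x. x > N \<longrightarrow> w x = x" "\<bar>x\<bar> \<le> N"
  shows "\<bar>w x\<bar> \<le> N"
  using win_bound[OF sp_basic(1)[OF assms(1)] sp_fix_abs[OF assms(1,2)] assms(3)] .



theorem lemma4p14:
  fixes X :: ctype and n l :: nat and v :: "int \<Rightarrow> int" and j :: "nat \<Rightarrow> int"
  assumes "n > 0"
    and "v \<in> W_n X n"
    and "LD v > 0"
    and "l \<ge> 1"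
    and "(\<forall>a b. 1 \<le> a \<longrightarrow> a < b \<longrightarrow> b \<le> l \<longrightarrow> j a < j b) \<and> (\<forall>a. 1 \<le> a \<longrightarrow> a \<le> l \<longrightarrow> j a < LD v)
         \<or> (X = TB \<and> j 1 = 0 \<and> (\<forall>a b. 2 \<le> a \<longrightarrow> a < b \<longrightarrow> b \<le> l \<longrightarrow> j a < j b)
            \<and> (\<forall>a. 2 \<le> a \<longrightarrow> a \<le> l \<longrightarrow> j a < LD v))"
    and "\<forall>a. 1 \<le> a \<longrightarrow> a \<le> l \<longrightarrow> tref (j a) (LD v) \<in> W_inf X"
    and "\<forall>a. 1 \<le> a \<longrightarrow> a \<le> l \<longrightarrow> len X (tprod v j (LD v) a) = len X v + int a"
  shows "(tprod v j (LD v) l \<in> W_n X n \<and> prec_LD (tprod v j (LD v) l) v)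
       \<or> (tprod v j (LD v) l \<in> W_n X (n + 1) \<and> LD (tprod v j (LD v) l) < LD v)"
proof -
  define k where "k = LD v"
  define u where "u = tprod v j k"
  have k0: "k > 0" using assms(3) k_def by simp
  have spv: "signed_perm v" and vfix: "\<forall>x. x > int n \<longrightarrow> v x = x" and vWi: "v \<in> W_inf X"
    using assms(2) by (auto simp: W_n_def W_inf_def)
  note vb = sp_basic[OF spv]
  have vne: "v x \<noteq> v y" if "x \<noteq> y" for x y using vb(1) that by (simp add: inj_eq)
  have kDes: "k \<in> Des v" using LD_in[OF vfix] assms(3) k_def by simp
  have noDes: "m \<notin> Des v" if "m > k" for m using LD_ge[OF vfix, of m] that k_def by auto
  have vinc: "v x < v (x + 1)" if "x > k" for x
  proof -
    have "\<not> v x > v (x + 1)" using noDes[OF that] that k0 by (simp add: Des_def)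
    moreover have "v x \<noteq> v (x + 1)" using vne by simp
    ultimately show ?thesis by simp
  qed
  have vmono_nat: "v x < v (x + 1 + int d)" if "x > k" for x d
  proof (induction d)
    case 0 then show ?case using vinc[OF that] by simp
  next
    case (Suc d)
    have "v (x + 1 + int d) < v (x + 1 + int d + 1)" using vinc[of "x + 1 + int d"] that by simp
    moreover have "x + 1 + int d + 1 = x + 1 + int (Suc d)" by simp
    ultimately show ?case using Suc by simp
  qed
  have vmono: "v x < v y" if "k < x" "x < y" for x y
    using vmono_nat[OF that(1), of "nat (y - x - 1)"] that by simp
  have kn: "k \<le> int n"
  proof (rule ccontr)
    assume "\<not> k \<le> int n"
    then have "v k = k" "v (k+1) = k + 1" using vfix by auto
    then show False using kDes by (simp add: Des_def)
  qed
  have jlt: "j a < k" if "1 \<le> a" "a \<le> l" for a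
    using assms(5) that k0 unfolding k_def[symmetric] by (cases "a = 1") auto
  have jord: "j c < j a \<or> (c = 1 \<and> j c = 0)" if "1 \<le> c" "c < a" "a \<le> l" for a c
    using assms(5) that by (cases "c = 1") auto
  have tsp: "signed_perm (tref (j a) k)" if "1 \<le> a" "a \<le> l" for a
    using assms(6) that unfolding k_def[symmetric] by (simp add: W_inf_def)
  have jD: "j a \<noteq> 0" if "1 \<le> a" "a \<le> l" "X = TD" for a
  proof
    assume "j a = 0"
    then have "tref 0 k \<in> W_inf TD" using assms(6) that unfolding k_def[symmetric] by auto
    then show False using ell0_tref0[OF k0] by (simp add: W_inf_def)
  qed
  have u0: "u 0 = v" unfolding u_def by simp
  have ustep: "u a = u (a - 1) \<circ> tref (j a) k" if "1 \<le> a" for a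
  proof -
    have "a = Suc (a - 1)" using that by simp
    then show ?thesis unfolding u_def by (metis tprod.simps(2))
  qed
  have spu: "signed_perm (u a)" if "a \<le> l" for a
    using that
  proof (induction a)
    case 0 then show ?case using u0 spv by simp
  next
    case (Suc a)
    have eq: "u (Suc a) = u a \<circ> tref (j (Suc a)) k" using ustep[of "Suc a"] by simp
    have "signed_perm (u a \<circ> tref (j (Suc a)) k)"
      using Suc.prems by (intro sp_comp Suc.IH tsp) auto
    then show ?case unfolding eq .
  qed
  have lstep: "len X (u a) = len X (u (a - 1)) + 1" if "1 \<le> a" "a \<le> l" for a
  proof (cases "a = 1")
    case True
    have "len X (tprod v j (LD v) 1) = len X v + int 1" using assms(7) that True by blast
    then show ?thesis using True u0 unfolding u_def k_def by simp
  next
    case False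
    then have "len X (u a) = len X v + int a" "len X (u (a-1)) = len X v + int (a - 1)"
      using assms(7) that unfolding u_def k_def by auto
    then show ?thesis using that by simp
  qed
  define pj where "pj a = (if j a = 0 then -k else j a)" for a
  have A: "j a \<noteq> -k \<and> u (a-1) (pj a) < u (a-1) k \<and> u a k = u (a-1) (pj a) \<and> reflp (tref (j a) k) (pj a) k"
    if "1 \<le> a" "a \<le> l" for a
  proof -
    have sp': "signed_perm (u (a-1))" using spu that by simp
    have ln: "len X (u (a - 1) \<circ> tref (j a) k) = len X (u (a - 1)) + 1"
      using lstep[OF that] ustep[OF that(1)] by simp
    note S = stepA[OF sp' k0 jlt[OF that] _ ln]
    show ?thesis using S jD that ustep[OF that(1)] unfolding pj_def by auto
  qed
  have parity: "X = TD \<Longrightarrow> even (ell0 (u a))" if "a \<le> l" for a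
    using that
  proof (induction a)
    case 0 then show ?case using u0 vWi by (simp add: W_inf_def)
  next
    case (Suc a)
    have a1: "1 \<le> Suc a" "Suc a \<le> l" using Suc.prems by auto
    have jn: "j (Suc a) \<noteq> 0" using jD[OF a1] Suc.prems by simp
    have rp: "reflp (tref (j (Suc a)) k) (j (Suc a)) k" using A[OF a1] jn unfolding pj_def by simp
    have "even (ell0 (u a \<circ> tref (j (Suc a)) k)) = even (ell0 (u a))"
      by (rule parity_step[OF spu rp jlt[OF a1] jn]) (use Suc.prems k0 A[OF a1] in auto)
    moreover have eq: "u (Suc a) = u a \<circ> tref (j (Suc a)) k" using ustep[of "Suc a"] by simp
    ultimately show ?case using Suc by (simp only: eq)
  qed
  have chain: "u b k + int (b - a) \<le> u a k" if "a \<le> b" "b \<le> l" for a b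
    using that
  proof (induction b)
    case 0 then show ?case by simp
  next
    case (Suc b)
    show ?case
    proof (cases "a = Suc b")
      case True then show ?thesis by simp
    next
      case False
      then have ab: "a \<le> b" using Suc.prems by simp
      have "u (Suc b) k < u b k" using A[of "Suc b"] Suc.prems by simp
      then show ?thesis using Suc.IH[OF ab] Suc.prems ab by (simp add: Suc_diff_le)
    qed
  qed
  have ulk: "u l k < v k" using chain[of 0 l] assms(4) u0 by simp
  define AA where "AA = {a. 1 \<le> a \<and> a \<le> l \<and> j a < -k}"
  have Aneg: "-k < j a \<and> j a < k" if "1 \<le> a" "a \<le> l" "a \<notin> AA" for a
    using that A[OF that(1,2)] jlt[OF that(1,2)] unfolding AA_def by auto
  have consec: False if a1: "a \<in> AA" and a2: "Suc a \<in> AA" for a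
  proof -
    have ha: "1 \<le> a" "a \<le> l" "j a < -k" using a1 unfolding AA_def by auto
    have hb: "1 \<le> Suc a" "Suc a \<le> l" "j (Suc a) < -k" using a2 unfolding AA_def by auto
    define i where "i = - j a"
    define i' where "i' = - j (Suc a)"
    have jj: "j a < j (Suc a)" using jord[of a "Suc a"] ha hb k0 by auto
    have ii: "k < i'" "i' < i" using jj hb unfolding i_def i'_def by auto
    have oc: "j c < j a \<or> j c = 0" if "1 \<le> c" "c < a" for c using jord[of c a] that ha by auto
    have ui: "u (a - 1) i = v i"
    proof -
      have "tprod v j k (a - 1) i = tprod v j k 0 i"
      proof (rule tprod_untouched)
        show "\<forall>c. 0 < c \<and> c \<le> a - 1 \<longrightarrow> i \<noteq> j c \<and> i \<noteq> - j c \<and> i \<noteq> k \<and> i \<noteq> - k"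
        proof (intro allI impI)
          fix c assume c: "0 < c \<and> c \<le> a - 1"
          then have "j c < j a \<or> j c = 0" using oc[of c] ha by auto
          then show "i \<noteq> j c \<and> i \<noteq> - j c \<and> i \<noteq> k \<and> i \<noteq> - k" using ha ii k0 unfolding i_def by auto
        qed
      qed simp
      then show ?thesis unfolding u_def by simp
    qed
    have ui': "u a i' = v i'"
    proof -
      have "tprod v j k a i' = tprod v j k 0 i'"
      proof (rule tprod_untouched)
        show "\<forall>c. 0 < c \<and> c \<le> a \<longrightarrow> i' \<noteq> j c \<and> i' \<noteq> - j c \<and> i' \<noteq> k \<and> i' \<noteq> - k"
        proof (intro allI impI)
          fix c assume c: "0 < c \<and> c \<le> a"
          then have "j c \<le> j a \<or> j c = 0" using oc[of c] ha by (cases "c = a") auto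
          then show "i' \<noteq> j c \<and> i' \<noteq> - j c \<and> i' \<noteq> k \<and> i' \<noteq> - k" using ha ii k0 unfolding i_def by auto
        qed
      qed simp
      then show ?thesis unfolding u_def by simp
    qed
    have pja: "pj a = j a" "pj (Suc a) = j (Suc a)" unfolding pj_def using ha hb k0 by auto
    have s1: "u a k = - v i"
      using A[OF ha(1,2)] pja ui sp_basic(2)[OF spu[of "a - 1"], of i] ha unfolding i_def by auto
    have s2: "u a (j (Suc a)) < u a k" using A[OF hb(1,2)] pja by simp
    have "u a (j (Suc a)) = - v i'"
      using ui' sp_basic(2)[OF spu[of a], of i'] ha unfolding i'_def by auto
    then have "v i < v i'" using s1 s2 by simp
    moreover have "v i' < v i" using vmono ii by simp
    ultimately show False by simp
  qed
  have atmost1: "a = b" if "a \<in> AA" "b \<in> AA" for a b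
  proof (rule ccontr)
    assume ne: "a \<noteq> b"
    have gen: False if x: "x \<in> AA" and y: "y \<in> AA" and xy: "x < y" for x y
    proof -
      have "Suc x \<in> AA"
      proof (cases "Suc x = y")
        case True then show ?thesis using y by simp
      next
        case False
        then have "Suc x < y" using xy by simp
        then have "j (Suc x) < j y" using jord[of "Suc x" y] x y unfolding AA_def by auto
        then show ?thesis using x y xy unfolding AA_def by auto
      qed
      then show False using consec x by blast
    qed
    have "a < b \<or> b < a" using ne by linarith
    then show False using gen that by blast
  qed
  have key: "(\<forall>x. x > k \<longrightarrow> u l x < u l (x+1)) \<and> (\<forall>x. x > int n + 1 \<longrightarrow> u l x = x)
     \<and> ((\<forall>x. x > int n \<longrightarrow> u l x = x) \<or> u l k < u l (k+1))"
  proof (cases "AA = {}")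
    case True
    have ulv: "u l x = v x" if "x > k" for x
    proof -
      have "tprod v j k l x = tprod v j k 0 x"
      proof (rule tprod_untouched)
        show "\<forall>c. 0 < c \<and> c \<le> l \<longrightarrow> x \<noteq> j c \<and> x \<noteq> - j c \<and> x \<noteq> k \<and> x \<noteq> - k"
        proof (intro allI impI)
          fix c assume c: "0 < c \<and> c \<le> l"
          then have "-k < j c \<and> j c < k" using Aneg[of c] True by auto
          then show "x \<noteq> j c \<and> x \<noteq> - j c \<and> x \<noteq> k \<and> x \<noteq> - k" using that k0 by auto
        qed
      qed simp
      then show ?thesis unfolding u_def by simp
    qed
    show ?thesis using ulv vinc vfix kn by auto
  next
    case False
    then obtain a0 where a0: "a0 \<in> AA" by blast
    have h0: "1 \<le> a0" "a0 \<le> l" "j a0 < -k" using a0 unfolding AA_def by auto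
    have oth: "-k < j c \<and> j c < k" if "1 \<le> c" "c \<le> l" "c \<noteq> a0" for c
      using Aneg[OF that(1,2)] atmost1[OF a0] that by blast
    define i where "i = - j a0"
    have ik: "i > k" unfolding i_def using h0 by simp
    define w where "w = u (a0 - 1)"
    have spw: "signed_perm w" unfolding w_def using spu h0 by simp
    have wne: "w x \<noteq> w y" if "x \<noteq> y" for x y using sp_basic(1)[OF spw] that by (simp add: inj_eq)
    have wv: "w x = v x" if "x > k" for x
    proof -
      have "tprod v j k (a0 - 1) x = tprod v j k 0 x"
      proof (rule tprod_untouched)
        show "\<forall>c. 0 < c \<and> c \<le> a0 - 1 \<longrightarrow> x \<noteq> j c \<and> x \<noteq> - j c \<and> x \<noteq> k \<and> x \<noteq> - k"
        proof (intro allI impI)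
          fix c assume c: "0 < c \<and> c \<le> a0 - 1"
          then have "-k < j c \<and> j c < k" using oth[of c] h0 by auto
          then show "x \<noteq> j c \<and> x \<noteq> - j c \<and> x \<noteq> k \<and> x \<noteq> - k" using that k0 by auto
        qed
      qed simp
      then show ?thesis unfolding u_def w_def by simp
    qed
    have ua0: "u a0 = w \<circ> tref (j a0) k" unfolding w_def using ustep h0 by simp
    have pja: "pj a0 = j a0" unfolding pj_def using h0 k0 by auto
    have rp: "reflp (tref (j a0) k) (j a0) k" using A[OF h0(1,2)] pja by simp
    have sv: "tref (j a0) k i = -k" using rp unfolding reflp_def i_def by simp
    have late: "u l x = u a0 x" if "x > k" for x
    proof -
      have "tprod v j k l x = tprod v j k a0 x"
      proof (rule tprod_untouched)
        show "\<forall>c. a0 < c \<and> c \<le> l \<longrightarrow> x \<noteq> j c \<and> x \<noteq> - j c \<and> x \<noteq> k \<and> x \<noteq> - k"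
        proof (intro allI impI)
          fix c assume c: "a0 < c \<and> c \<le> l"
          then have "-k < j c \<and> j c < k" using oth[of c] h0 by auto
          then show "x \<noteq> j c \<and> x \<noteq> - j c \<and> x \<noteq> k \<and> x \<noteq> - k" using that k0 by auto
        qed
      qed (use h0 in simp)
      then show ?thesis unfolding u_def by simp
    qed
    have ulx: "u l x = v x" if "x > k" "x \<noteq> i" for x
    proof -
      have "tref (j a0) k x = x" using that h0 k0 unfolding i_def by (intro tref_fix) auto
      then show ?thesis using late[OF that(1)] ua0 wv[OF that(1)] by simp
    qed
    have uli: "u l i = - w k"
      using late[OF ik] ua0 sv sp_basic(2)[OF spw, of k] by simp
    have FA: "w (j a0) < w k" using A[OF h0(1,2)] pja unfolding w_def by simp
    have wi: "w (j a0) = - v i" using sp_basic(2)[OF spw, of i] wv[OF ik] unfolding i_def by simp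
    have ua0k: "u a0 k = - v i" using A[OF h0(1,2)] pja wi unfolding w_def by simp
    have wfix: "\<forall>x. x > int n \<longrightarrow> w x = x" using wv vfix kn by auto
    have wkb: "\<bar>w k\<bar> \<le> int n" using sp_val_bound[OF spw wfix] kn k0 by simp
    have FB: "v (i - 1) < - w k" if "i - 1 > k"
    proof (rule ccontr)
      assume "\<not> v (i - 1) < - w k"
      moreover have "v (i - 1) \<noteq> - w k"
      proof
        assume "v (i - 1) = - w k"
        then have "w (1 - i) = w k" using wv[OF that] sp_basic(2)[OF spw, of "i - 1"] by simp
        then show False using wne[of "1 - i" k] that k0 by auto
      qed
      ultimately have c1: "w (1 - i) < w k" using wv[OF that] sp_basic(2)[OF spw, of "i - 1"] by simp
      have c2: "w (j a0) < w (1 - i)"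
        using wi vmono[of "i - 1" i] that wv[OF that] sp_basic(2)[OF spw, of "i - 1"] by simp
      have "len X (w \<circ> tref (j a0) k) \<ge> len X w + 2"
        by (rule len_incr(2)[OF spw rp _ _ _ FA _ _ _ _ _ _ _ _ c2 c1])
          (use h0 k0 that A[OF h0(1,2)] i_def in auto)
      moreover have "len X (w \<circ> tref (j a0) k) = len X w + 1"
        using lstep[OF h0(1,2)] ua0 unfolding w_def by simp
      ultimately show False by simp
    qed
    have iub: "i \<le> int n + 1"
    proof (rule ccontr)
      assume "\<not> i \<le> int n + 1"
      then have "i - 1 > k" "v (i - 1) = i - 1" using kn vfix by auto
      then show False using FB wkb \<open>\<not> i \<le> int n + 1\<close> by simp
    qed
    have c1: "\<forall>x. x > k \<longrightarrow> u l x < u l (x+1)"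
    proof (intro allI impI)
      fix x assume xk: "x > k"
      show "u l x < u l (x+1)"
      proof (cases "x + 1 = i")
        case True
        then have xi: "x = i - 1" by simp
        then have "u l x = v (i - 1)" using ulx[OF xk] by simp
        moreover have "v (i - 1) < - w k" using FB xi xk by simp
        ultimately show ?thesis using uli True by simp
      next
        case False
        show ?thesis
        proof (cases "x = i")
          case True
          have "- w k < v i" using FA wi by simp
          also have "v i < v (i + 1)" using vinc ik by simp
          finally show ?thesis using True uli ulx[of "i+1"] ik by simp
        next
          case False
          then show ?thesis using ulx[OF xk False] ulx[of "x+1"] \<open>x + 1 \<noteq> i\<close> xk vinc by simp
        qed
      qed
    qed
    have c2: "\<forall>x. x > int n + 1 \<longrightarrow> u l x = x" using ulx iub vfix kn by auto
    have c3: "(\<forall>x. x > int n \<longrightarrow> u l x = x) \<or> u l k < u l (k+1)"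
    proof (cases "i \<le> int n")
      case True
      then show ?thesis using ulx vfix kn by auto
    next
      case False
      then have iN: "i = int n + 1" using iub by simp
      have "u l k \<le> u a0 k" using chain[of a0 l] h0 by simp
      also have "\<dots> = - (int n + 1)" using ua0k vfix iN by simp
      finally have lk: "u l k \<le> - (int n + 1)" .
      have "u l (k+1) \<ge> - int n"
      proof (cases "k + 1 = i")
        case True then show ?thesis using uli wkb by simp
      next
        case False
        then have "k + 1 \<le> int n" using iN kn by simp
        then have "\<bar>v (k+1)\<bar> \<le> int n" using sp_val_bound[OF spv vfix] k0 by simp
        then show ?thesis using ulx[of "k+1"] False by simp
      qed
      then show ?thesis using lk by simp
    qed
    show ?thesis using c1 c2 c3 by blast
  qed
  have spl: "signed_perm (u l)" using spu by simp
  have ulWi: "u l \<in> W_inf X" using spl parity[of l] by (simp add: W_inf_def)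
  have fixl: "\<forall>x. x > int n + 1 \<longrightarrow> u l x = x" using key by blast
  have LDle: "LD (u l) \<le> k" using LD_le[OF fixl] k0 key by simp
  have ueq: "tprod v j (LD v) l = u l" unfolding u_def k_def ..
  show ?thesis unfolding ueq
  proof (cases "\<forall>x. x > int n \<longrightarrow> u l x = x")
    case True
    have W: "u l \<in> W_n X n" using ulWi True by (simp add: W_n_def)
    have "prec_LD (u l) v"
    proof (cases "LD (u l) < k")
      case True then show ?thesis unfolding prec_LD_def k_def by simp
    next
      case False
      then have "LD (u l) = k" using LDle by simp
      then show ?thesis unfolding prec_LD_def using k0 ulk k_def by simp
    qed
    then show "(u l \<in> W_n X n \<and> prec_LD (u l) v) \<or> (u l \<in> W_n X (n + 1) \<and> LD (u l) < LD v)"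
      using W by blast
  next
    case False
    then have lt: "u l k < u l (k+1)" using key by blast
    have W: "u l \<in> W_n X (n + 1)" using ulWi fixl by (simp add: W_n_def)
    have "LD (u l) \<noteq> k"
    proof
      assume e: "LD (u l) = k"
      then have "k \<in> Des (u l)" using LD_in[OF fixl] k0 by simp
      then show False using lt by (simp add: Des_def)
    qed
    then have "LD (u l) < LD v" using LDle k_def by simp
    then show "(u l \<in> W_n X n \<and> prec_LD (u l) v) \<or> (u l \<in> W_n X (n + 1) \<and> LD (u l) < LD v)"
      using W by blast
  qed
qed

end
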